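(* Let $l$ be a positive integer and let $G_l$ be the graph obtained by identifying a vertex of the complete graph $K_{l+2}$ with a vertex of the Cartesian product $P_{l+1}\times P_2$. Then $k(G_l)=1$ and $p(G_l)=l$.
   Context: All graphs are finite and simple. $P_n$ is the path on $n$ vertices; the Cartesian product $G_1\times G_2$ has vertex set $V(G_1)\times V(G_2)$, with $(u_1,u_2)$ adjacent to $(v_1,v_2)$ iff either $u_1=v_1$ and $u_2v_2\in E(G_2)$, or $u_2=v_2$ and $u_1v_1\in E(G_1)$. For an acyclic digraph $D$, the competition graph $C(D)$ is the graph on $V(D)$ in which distinct $u,v$ are adjacent iff they have a common out-neighbor in $D$. The competition number $k(G)$ is the smallest $k\ge 0$ such that $G$ together with $k$ new isolated vertices is the competition graph of some acyclic digraph. The phylogeny graph $P(D)$ of an acyclic digraph $D$ is the graph on $V(D)$ in which distinct vertices $u,v$ are adjacent iff $(u,v)\in A(D)$, or $(v,u)\in A(D)$, or they have a common out-neighbor in $D$. A phylogeny digraph for a graph $G$ is an acyclic digraph $D$ such that $G$ is an induced subgraph of $P(D)$ and $D$ has no arc from a vertex of $V(D)\setminus V(G)$ to a vertex of $V(G)$. The phylogeny number $p(G)$ is the minimum of $|V(D)\setminus V(G)|$ over all phylogeny digraphs $D$ for $G$. *)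

theory Defs
  imports Main
begin

text \<open>A finite simple graph is given by a vertex set V and a symmetric, irreflexive
  adjacency predicate E (only relevant on V).\<close>

definition path_V :: "nat \<Rightarrow> nat set" where
  "path_V n = {..<n}"

definition path_E :: "nat \<Rightarrow> nat \<Rightarrow> nat \<Rightarrow> bool" where
  "path_E n i j \<longleftrightarrow> i < n \<and> j < n \<and> (i + 1 = j \<or> j + 1 = i)"

definition complete_V :: "nat \<Rightarrow> nat set" where
  "complete_V n = {..<n}"

definition complete_E :: "nat \<Rightarrow> nat \<Rightarrow> nat \<Rightarrow> bool" where
  "complete_E n i j \<longleftrightarrow> i < n \<and> j < n \<and> i \<noteq> j"

definition cart_V :: "'a set \<Rightarrow> 'b set \<Rightarrow> ('a \<times> 'b) set" where
  "cart_V V1 V2 = V1 \<times> V2"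

definition cart_E :: "'a set \<Rightarrow> ('a \<Rightarrow> 'a \<Rightarrow> bool) \<Rightarrow> 'b set \<Rightarrow> ('b \<Rightarrow> 'b \<Rightarrow> bool)
    \<Rightarrow> 'a \<times> 'b \<Rightarrow> 'a \<times> 'b \<Rightarrow> bool" where
  "cart_E V1 E1 V2 E2 x y \<longleftrightarrow> x \<in> V1 \<times> V2 \<and> y \<in> V1 \<times> V2 \<and>
     ((fst x = fst y \<and> E2 (snd x) (snd y)) \<or> (snd x = snd y \<and> E1 (fst x) (fst y)))"

text \<open>Identifying vertex a of G1 with vertex b of G2: vertex Inr b is replaced by Inl a.\<close>
definition glue_map :: "'a \<Rightarrow> 'b \<Rightarrow> 'a + 'b \<Rightarrow> 'a + 'b" where
  "glue_map a b x = (case x of Inl u \<Rightarrow> Inl u | Inr v \<Rightarrow> (if v = b then Inl a else Inr v))"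

definition glue_V :: "'a set \<Rightarrow> 'a \<Rightarrow> 'b set \<Rightarrow> 'b \<Rightarrow> ('a + 'b) set" where
  "glue_V V1 a V2 b = Inl ` V1 \<union> Inr ` (V2 - {b})"

definition glue_E :: "('a \<Rightarrow> 'a \<Rightarrow> bool) \<Rightarrow> 'a \<Rightarrow> ('b \<Rightarrow> 'b \<Rightarrow> bool) \<Rightarrow> 'b
    \<Rightarrow> 'a + 'b \<Rightarrow> 'a + 'b \<Rightarrow> bool" where
  "glue_E E1 a E2 b x y \<longleftrightarrow> x \<noteq> y \<and>
     ((\<exists>u v. E1 u v \<and> x = Inl u \<and> y = Inl v) \<or>
      (\<exists>u v. E2 u v \<and> x = glue_map a b (Inr u) \<and> y = glue_map a b (Inr v)))"

definition Gl_V :: "nat \<Rightarrow> (nat + nat \<times> nat) set" where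
  "Gl_V l = glue_V (complete_V (l + 2)) 0 (cart_V (path_V (l + 1)) (path_V 2)) (0, 0)"

definition Gl_E :: "nat \<Rightarrow> nat + nat \<times> nat \<Rightarrow> nat + nat \<times> nat \<Rightarrow> bool" where
  "Gl_E l = glue_E (complete_E (l + 2)) 0 (cart_E (path_V (l + 1)) (path_E (l + 1)) (path_V 2) (path_E 2)) (0, 0)"

text \<open>Competition number: G together with k new isolated vertices (Inr 0, ..., Inr (k-1))
  is the competition graph of an acyclic digraph A on that vertex set.\<close>
definition competition_number :: "'a set \<Rightarrow> ('a \<Rightarrow> 'a \<Rightarrow> bool) \<Rightarrow> nat" where
  "competition_number V E = (LEAST k. \<exists>A :: (('a + nat) \<times> ('a + nat)) set.
     A \<subseteq> (Inl ` V \<union> Inr ` {..<k}) \<times> (Inl ` V \<union> Inr ` {..<k}) \<and> acyclic A \<and>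
     (\<forall>x \<in> Inl ` V \<union> Inr ` {..<k}. \<forall>y \<in> Inl ` V \<union> Inr ` {..<k}. x \<noteq> y \<longrightarrow>
        ((\<exists>u v. x = Inl u \<and> y = Inl v \<and> E u v) \<longleftrightarrow>
         (\<exists>w. (x, w) \<in> A \<and> (y, w) \<in> A))))"

text \<open>Phylogeny number: minimum number k of extra vertices (Inr 0, ..., Inr (k-1)) of an
  acyclic digraph D on V plus the extra vertices such that G is an induced subgraph of
  the phylogeny graph P(D) and there is no arc from an extra vertex to a vertex of G.\<close>
definition phylogeny_adj :: "('v \<times> 'v) set \<Rightarrow> 'v \<Rightarrow> 'v \<Rightarrow> bool" where
  "phylogeny_adj A x y \<longleftrightarrow> x \<noteq> y \<and>
     ((x, y) \<in> A \<or> (y, x) \<in> A \<or> (\<exists>w. (x, w) \<in> A \<and> (y, w) \<in> A))"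

definition phylogeny_number :: "'a set \<Rightarrow> ('a \<Rightarrow> 'a \<Rightarrow> bool) \<Rightarrow> nat" where
  "phylogeny_number V E = (LEAST k. \<exists>A :: (('a + nat) \<times> ('a + nat)) set.
     A \<subseteq> (Inl ` V \<union> Inr ` {..<k}) \<times> (Inl ` V \<union> Inr ` {..<k}) \<and> acyclic A \<and>
     (\<forall>i u. (Inr i, Inl u) \<notin> A) \<and>
     (\<forall>u \<in> V. \<forall>v \<in> V. u \<noteq> v \<longrightarrow> (E u v \<longleftrightarrow> phylogeny_adj A (Inl u) (Inl v))))"

end

theory Submission
  imports Defs
begin


definition lad :: "nat \<times> nat \<Rightarrow> nat + nat \<times> nat" where
  "lad p = (if p = (0,0) then Inl 0 else Inr p)"

lemma lad_inj[simp]: "lad p = lad q \<longleftrightarrow> p = q"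
  by (auto simp: lad_def)

lemma lad_Inl[simp]: "lad p = Inl k \<longleftrightarrow> p = (0,0) \<and> k = 0"
  by (auto simp: lad_def)

lemma Inl_lad[simp]: "Inl k = lad p \<longleftrightarrow> p = (0,0) \<and> k = 0"
  by (auto simp: lad_def)

lemma glue_map_lad: "glue_map 0 (0,0) (Inr p) = lad p"
  by (simp add: glue_map_def lad_def)

definition ladj :: "nat \<Rightarrow> nat \<times> nat \<Rightarrow> nat \<times> nat \<Rightarrow> bool" where
  "ladj l p q \<longleftrightarrow> fst p \<le> l \<and> fst q \<le> l \<and> snd p < 2 \<and> snd q < 2 \<and>
     ((fst p = fst q \<and> snd p \<noteq> snd q) \<or> (snd p = snd q \<and> (fst p + 1 = fst q \<or> fst q + 1 = fst p)))"

lemma ladj_sym: "ladj l p q \<Longrightarrow> ladj l q p"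
  by (auto simp: ladj_def)

lemma ladj_neq: "ladj l p q \<Longrightarrow> p \<noteq> q"
  by (auto simp: ladj_def)

lemma Gl_V_eq: "Gl_V l = Inl ` {..<l+2} \<union> lad ` ({..l} \<times> {..<2})"
proof -
  have "Inr ` (({..<l+1} \<times> {..<2}) - {(0,0)}) \<union> {Inl 0} = lad ` ({..l} \<times> {..<2})"
    unfolding lad_def by (auto simp: image_iff)
  moreover have "Inl 0 \<in> Inl ` {..<l+2}" by auto
  ultimately show ?thesis
    unfolding Gl_V_def glue_V_def complete_V_def cart_V_def path_V_def by auto
qed

lemma Gl_E_eq: "Gl_E l x y \<longleftrightarrow> x \<noteq> y \<and>
   ((\<exists>u v. u < l+2 \<and> v < l+2 \<and> x = Inl u \<and> y = Inl v) \<or> (\<exists>p q. ladj l p q \<and> x = lad p \<and> y = lad q))"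
proof -
  have key: "\<And>u v. (u \<in> {..<l + 1} \<times> {..<2} \<and> v \<in> {..<l + 1} \<times> {..<2} \<and>
     (fst u = fst v \<and> snd u < 2 \<and> snd v < 2 \<and> (snd u + 1 = snd v \<or> snd v + 1 = snd u) \<or>
      snd u = snd v \<and> fst u < l + 1 \<and> fst v < l + 1 \<and> (fst u + 1 = fst v \<or> fst v + 1 = fst u)))
     \<longleftrightarrow> ladj l u v"
    by (auto simp: ladj_def)
  show ?thesis
  unfolding Gl_E_def glue_E_def complete_E_def cart_E_def path_V_def path_E_def glue_map_lad key
  by blast
qed

lemma acyclic_rank:
  fixes f :: "'v \<Rightarrow> int"
  assumes "\<And>x y. (x, y) \<in> A \<Longrightarrow> f y < f x"
  shows "acyclic A"
proof -
  have "(x, y) \<in> A\<^sup>+ \<Longrightarrow> f y < f x" for x y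
    by (induction rule: trancl_induct) (auto dest: assms)
  then show ?thesis unfolding acyclic_def by fastforce
qed

lemma no_sink:
  assumes fin: "finite V" and ne: "V \<noteq> {}" and iso: "\<forall>x\<in>V. \<exists>y\<in>V. x \<noteq> y \<and> E x y"
  shows "\<not> (\<exists>A :: (('a + nat) \<times> ('a + nat)) set.
     A \<subseteq> (Inl ` V \<union> Inr ` {..<0}) \<times> (Inl ` V \<union> Inr ` {..<0}) \<and> acyclic A \<and>
     (\<forall>x \<in> Inl ` V \<union> Inr ` {..<0}. \<forall>y \<in> Inl ` V \<union> Inr ` {..<0}. x \<noteq> y \<longrightarrow>
        ((\<exists>u v. x = Inl u \<and> y = Inl v \<and> E u v) \<longleftrightarrow>
         (\<exists>w. (x, w) \<in> A \<and> (y, w) \<in> A))))"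
proof
  assume "\<exists>A :: (('a + nat) \<times> ('a + nat)) set.
     A \<subseteq> (Inl ` V \<union> Inr ` {..<0}) \<times> (Inl ` V \<union> Inr ` {..<0}) \<and> acyclic A \<and>
     (\<forall>x \<in> Inl ` V \<union> Inr ` {..<0}. \<forall>y \<in> Inl ` V \<union> Inr ` {..<0}. x \<noteq> y \<longrightarrow>
        ((\<exists>u v. x = Inl u \<and> y = Inl v \<and> E u v) \<longleftrightarrow>
         (\<exists>w. (x, w) \<in> A \<and> (y, w) \<in> A)))"
  then obtain A :: "(('a + nat) \<times> ('a + nat)) set" where
    sub: "A \<subseteq> (Inl ` V) \<times> (Inl ` V)" and ac: "acyclic A" and
    cond: "\<forall>x \<in> Inl ` V. \<forall>y \<in> Inl ` V. x \<noteq> y \<longrightarrow>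
        ((\<exists>u v. x = Inl u \<and> y = Inl v \<and> E u v) \<longleftrightarrow>
         (\<exists>w. (x, w) \<in> A \<and> (y, w) \<in> A))" by auto
  have "finite A" using sub fin by (meson finite_SigmaI finite_imageI finite_subset)
  then have "wf (A\<inverse>)" using ac by (rule finite_acyclic_wf_converse)
  moreover obtain v0 where "v0 \<in> V" using ne by auto
  ultimately obtain z where z: "z \<in> Inl ` V" and zs: "\<And>y. (y, z) \<in> A\<inverse> \<Longrightarrow> y \<notin> Inl ` V"
    unfolding wf_eq_minimal by (metis imageI)
  then obtain u where u: "u \<in> V" "z = Inl u" by auto
  then obtain y where y: "y \<in> V" "u \<noteq> y" "E u y" using iso by auto
  then obtain w where "(z, w) \<in> A" using cond u by (metis imageI sum.inject(1))
  then show False using zs sub by blast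
qed

definition L :: "nat \<times> nat \<Rightarrow> (nat + nat \<times> nat) + nat" where
  "L p = Inl (lad p)"

definition Nc :: "nat \<Rightarrow> (nat + nat \<times> nat) + nat \<Rightarrow> ((nat + nat \<times> nat) + nat) set" where
  "Nc l w = (case w of Inr n \<Rightarrow> if n = 0 then (\<lambda>k. Inl (Inl k)) ` {..<l+2} else {}
     | Inl (Inl k) \<Rightarrow> if k = 0 then {L (0,1), L (1,1)} else if k \<le> l then {L (k-1,0), L (k,0)}
          else if k = l + 1 then {L (0,0), L (0,1)} else {}
     | Inl (Inr (i,j)) \<Rightarrow> if i < l \<and> j = 1 then {L (i+1,0), L (i+1,1)}
          else if 0 < i \<and> i < l \<and> j = 0 then {L (i,1), L (i+1,1)} else {})"

definition fc :: "(nat + nat \<times> nat) + nat \<Rightarrow> int" where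
  "fc w = (case w of Inr n \<Rightarrow> 0 | Inl (Inl k) \<Rightarrow> if k = 0 then 2 else 1
     | Inl (Inr (i,j)) \<Rightarrow> 2 * int i + int j + 2)"

lemma fc_L: "fc (L p) = 2 * int (fst p) + int (snd p) + 2"
  by (cases p) (auto simp: fc_def L_def lad_def)

lemma Nc_rank: "x \<in> Nc l w \<Longrightarrow> fc w < fc x"
  by (auto simp: Nc_def fc_L split: sum.splits if_splits) (auto simp: fc_def)



lemma Ledge: "ladj l p q \<Longrightarrow> Gl_E l (lad p) (lad q)"
  unfolding Gl_E_eq using ladj_neq by fastforce

lemma Ledge2: "ladj l p q \<Longrightarrow> x \<in> {L p, L q} \<Longrightarrow> y \<in> {L p, L q} \<Longrightarrow> x \<noteq> y \<Longrightarrow>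
   \<exists>u v. x = Inl u \<and> y = Inl v \<and> Gl_E l u v"
  using Ledge[of l p q] Ledge[of l q p] ladj_sym by (auto simp: L_def)

lemma Nc_clique:
  assumes "x \<in> Nc l w" "y \<in> Nc l w" "x \<noteq> y" and l0: "0 < l"
  shows "\<exists>u v. x = Inl u \<and> y = Inl v \<and> Gl_E l u v"
proof (cases w)
  case (Inr n)
  then show ?thesis using assms by (auto simp: Nc_def Gl_E_eq split: if_splits)
next
  case (Inl a)
  show ?thesis
  proof (cases a)
    case (Inl k)
    show ?thesis
    proof -
      consider "k = 0" | "0 < k" "k \<le> l" | "k = l + 1" | "k > l + 1" by linarith
      then show ?thesis
      proof cases
        case 1
        then have "ladj l (0,1) (1,1)" using l0 by (auto simp: ladj_def)
        then show ?thesis using assms 1 \<open>w = _\<close> Inl Ledge2[of l "(0,1)" "(1,1)" x y]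
          by (auto simp: Nc_def)
      next
        case 2
        then have "ladj l (k-1,0) (k,0)" by (auto simp: ladj_def)
        then show ?thesis using assms 2 \<open>w = _\<close> Inl Ledge2[of l "(k-1,0)" "(k,0)" x y]
          by (auto simp: Nc_def)
      next
        case 3
        then have "ladj l (0,0) (0,1)" by (auto simp: ladj_def)
        then show ?thesis using assms 3 \<open>w = _\<close> Inl Ledge2[of l "(0,0)" "(0,1)" x y]
          by (auto simp: Nc_def)
      next
        case 4
        then show ?thesis using assms \<open>w = _\<close> Inl by (auto simp: Nc_def)
      qed
    qed
  next
    case (Inr p)
    obtain i j where p: "p = (i,j)" by force
    show ?thesis
    proof -
      consider "i < l" "j = 1" | "0 < i" "i < l" "j = 0" | "\<not> (i < l \<and> j = 1)" "\<not> (0 < i \<and> i < l \<and> j = 0)" by blast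
      then show ?thesis
      proof cases
        case 1
        then have "ladj l (i+1,0) (i+1,1)" by (auto simp: ladj_def)
        then show ?thesis using assms 1 \<open>w = _\<close> Inl Inr p Ledge2[of l "(i+1,0)" "(i+1,1)" x y]
          by (auto simp: Nc_def)
      next
        case 2
        then have "ladj l (i,1) (i+1,1)" by (auto simp: ladj_def)
        then show ?thesis using assms 2 \<open>w = _\<close> Inl Inr p Ledge2[of l "(i,1)" "(i+1,1)" x y]
          by (auto simp: Nc_def)
      next
        case 3
        then show ?thesis using assms \<open>w = _\<close> Inl Inr p by (auto simp: Nc_def)
      qed
    qed
  qed
qed



lemma ladj_cov_aux:
  assumes "ladj l (i,j) (i',j')" "i \<le> i'"
  shows "\<exists>w. L (i,j) \<in> Nc l w \<and> L (i',j') \<in> Nc l w"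
proof -
  have j2: "j = 0 \<or> j = 1" using assms by (auto simp: ladj_def)
  consider "i = i'" "i = 0" | "i = i'" "0 < i" | "j = j'" "i' = i + 1" "j = 0" | "j = j'" "i' = i + 1" "j = 1" "i = 0"
    | "j = j'" "i' = i + 1" "j = 1" "0 < i"
    using assms j2 by (cases "i = 0") (auto simp: ladj_def)
  then show ?thesis
  proof cases
    case 1
    then have "{(i,j),(i',j')} = {(0,0),(0,1)}" using assms by (auto simp: ladj_def)
    then show ?thesis by (intro exI[of _ "Inl (Inl (l+1))"]) (auto simp: Nc_def doubleton_eq_iff)
  next
    case 2
    then have "{(i,j),(i',j')} = {(i,0),(i,1)}" using assms by (auto simp: ladj_def)
    then show ?thesis using 2 assms by (intro exI[of _ "Inl (Inr (i-1,1))"]) (auto simp: Nc_def doubleton_eq_iff ladj_def)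
  next
    case 3
    then show ?thesis using assms by (intro exI[of _ "Inl (Inl (i+1))"]) (auto simp: Nc_def ladj_def)
  next
    case 4
    then show ?thesis using assms by (intro exI[of _ "Inl (Inl 0)"]) (auto simp: Nc_def ladj_def)
  next
    case 5
    then show ?thesis using assms by (intro exI[of _ "Inl (Inr (i,0))"]) (auto simp: Nc_def ladj_def)
  qed
qed

lemma ladj_cov:
  assumes "ladj l p q"
  shows "\<exists>w. L p \<in> Nc l w \<and> L q \<in> Nc l w"
proof -
  obtain i j i' j' where pq: "p = (i,j)" "q = (i',j')" by force
  show ?thesis
  proof (cases "i \<le> i'")
    case True then show ?thesis using ladj_cov_aux assms pq by blast
  next
    case False then show ?thesis using ladj_cov_aux[of l i' j' i j] ladj_sym assms pq by fastforce
  qed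
qed

lemma edge_cov:
  assumes "Gl_E l u v"
  shows "\<exists>w. Inl u \<in> Nc l w \<and> Inl v \<in> Nc l w"
proof -
  from assms consider a b where "a < l + 2" "b < l + 2" "u = Inl a" "v = Inl b"
    | p q where "ladj l p q" "u = lad p" "v = lad q" unfolding Gl_E_eq by blast
  then show ?thesis
  proof cases
    case 1
    then show ?thesis by (intro exI[of _ "Inr 0"]) (auto simp: Nc_def)
  next
    case 2
    then show ?thesis using ladj_cov[of l p q] by (auto simp: L_def)
  qed
qed

lemma Nc_sub:
  assumes "x \<in> Nc l w" "0 < l"
  shows "x \<in> Inl ` Gl_V l \<union> Inr ` {..<1} \<and> w \<in> Inl ` Gl_V l \<union> Inr ` {..<1}"
proof -
  have Lin: "L p \<in> Inl ` Gl_V l" if "fst p \<le> l" "snd p < 2" for p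
    using that unfolding Gl_V_eq L_def by (cases p) auto
  have Cin: "Inl (Inl k) \<in> Inl ` Gl_V l" if "k < l + 2" for k
    using that unfolding Gl_V_eq by auto
  have Rin: "Inl (Inr (i,j)) \<in> Inl ` Gl_V l" if "i \<le> l" "j < 2" "(i,j) \<noteq> (0,0)" for i j
    using Lin[of "(i,j)"] that by (auto simp: L_def lad_def)
  show ?thesis
  proof (cases w)
    case (Inr n)
    then show ?thesis using assms Cin by (auto simp: Nc_def split: if_splits)
  next
    case (Inl a)
    show ?thesis
    proof (cases a)
      case (Inl k)
      then show ?thesis using assms \<open>w = _\<close> Lin Cin by (auto simp: Nc_def split: if_splits)
    next
      case (Inr p)
      obtain i j where p: "p = (i,j)" by force
      then show ?thesis using assms \<open>w = _\<close> Inr Lin Rin[of i j] by (auto simp: Nc_def split: if_splits)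
    qed
  qed
qed

lemma comp_exists:
  assumes "0 < l"
  shows "\<exists>A :: (((nat + nat \<times> nat) + nat) \<times> ((nat + nat \<times> nat) + nat)) set.
     A \<subseteq> (Inl ` Gl_V l \<union> Inr ` {..<1}) \<times> (Inl ` Gl_V l \<union> Inr ` {..<1}) \<and> acyclic A \<and>
     (\<forall>x \<in> Inl ` Gl_V l \<union> Inr ` {..<1}. \<forall>y \<in> Inl ` Gl_V l \<union> Inr ` {..<1}. x \<noteq> y \<longrightarrow>
        ((\<exists>u v. x = Inl u \<and> y = Inl v \<and> Gl_E l u v) \<longleftrightarrow>
         (\<exists>w. (x, w) \<in> A \<and> (y, w) \<in> A)))"
proof (intro exI[of _ "{(x,w). x \<in> Nc l w}"] conjI ballI impI)
  show "{(x,w). x \<in> Nc l w} \<subseteq> (Inl ` Gl_V l \<union> Inr ` {..<1}) \<times> (Inl ` Gl_V l \<union> Inr ` {..<1})"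
    using Nc_sub[OF _ assms] by blast
  show "acyclic {(x,w). x \<in> Nc l w}"
    by (rule acyclic_rank[of _ fc]) (auto dest: Nc_rank)
  fix x y :: "(nat + nat \<times> nat) + nat" assume "x \<noteq> y"
  show "(\<exists>u v. x = Inl u \<and> y = Inl v \<and> Gl_E l u v) \<longleftrightarrow>
         (\<exists>w. (x, w) \<in> {(x,w). x \<in> Nc l w} \<and> (y, w) \<in> {(x,w). x \<in> Nc l w})"
    using edge_cov Nc_clique[OF _ _ \<open>x \<noteq> y\<close> assms] by auto
qed



lemma Gl_E_sym: "Gl_E l u v \<Longrightarrow> Gl_E l v u"
  unfolding Gl_E_eq using ladj_sym by blast

definition Np :: "nat \<Rightarrow> (nat + nat \<times> nat) + nat \<Rightarrow> ((nat + nat \<times> nat) + nat) set" where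
  "Np l w = (case w of Inr n \<Rightarrow> if n < l then {L (n+1,0), L (n+1,1)} else {}
     | Inl (Inl k) \<Rightarrow> if k = 0 then (\<lambda>k. Inl (Inl k)) ` {1..l+1} else {}
     | Inl (Inr (i,j)) \<Rightarrow> if j = 0 \<and> 1 \<le> i \<and> i \<le> l then {L (i-1,0)}
          else if j = 1 \<and> 1 \<le> i \<and> i \<le> l then {L (i-1,1)}
          else if j = 1 \<and> i = 0 then {L (0,0)} else {})"

definition fp :: "nat \<Rightarrow> (nat + nat \<times> nat) + nat \<Rightarrow> int" where
  "fp l w = (case w of Inr n \<Rightarrow> - (2 * int l + 3) | Inl (Inl k) \<Rightarrow> if k = 0 then 0 else 1
     | Inl (Inr (i,j)) \<Rightarrow> - 1 - 2 * int i - int j)"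

lemma Np_rank: "x \<in> Np l w \<Longrightarrow> fp l w < fp l x"
  by (auto simp: Np_def L_def lad_def fp_def split: sum.splits if_splits)

lemma Np_Inl: "x \<in> Np l w \<Longrightarrow> \<exists>u. x = Inl u"
  by (auto simp: Np_def L_def split: sum.splits if_splits)

lemma Np_arc:
  assumes "x \<in> Np l (Inl v)"
  shows "\<exists>u. x = Inl u \<and> Gl_E l u v"
proof (cases v)
  case (Inl k)
  then show ?thesis using assms by (auto simp: Np_def Gl_E_eq split: if_splits)
next
  case (Inr p)
  obtain i j where p: "p = (i,j)" by force
  consider "j = 0" "1 \<le> i" "i \<le> l" | "j = 1" "1 \<le> i" "i \<le> l" | "j = 1" "i = 0"
    | "\<not> (j = 0 \<and> 1 \<le> i \<and> i \<le> l)" "\<not> (j = 1 \<and> 1 \<le> i \<and> i \<le> l)" "\<not> (j = 1 \<and> i = 0)" by blast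
  then show ?thesis
  proof cases
    case 1
    then have "ladj l (i-1,0) (i,0)" by (auto simp: ladj_def)
    moreover have "lad (i,0) = v" using 1 Inr p by (auto simp: lad_def)
    moreover have "x = L (i-1,0)" using assms 1 Inr p by (auto simp: Np_def split: if_splits)
    ultimately show ?thesis using Ledge by (auto simp: L_def)
  next
    case 2
    then have "ladj l (i-1,1) (i,1)" by (auto simp: ladj_def)
    moreover have "lad (i,1) = v" using 2 Inr p by (auto simp: lad_def)
    moreover have "x = L (i-1,1)" using assms 2 Inr p by (auto simp: Np_def split: if_splits)
    ultimately show ?thesis using Ledge by (auto simp: L_def)
  next
    case 3
    then have "ladj l (0,0) (0,1)" by (auto simp: ladj_def)
    moreover have "lad (0,1) = v" using 3 Inr p by (auto simp: lad_def)
    moreover have "x = L (0,0)" using assms 3 Inr p by (auto simp: Np_def split: if_splits)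
    ultimately show ?thesis using Ledge by (auto simp: L_def)
  next
    case 4
    then show ?thesis using assms Inr p by (auto simp: Np_def)
  qed
qed

lemma Np_clique:
  assumes "x \<in> Np l w" "y \<in> Np l w" "x \<noteq> y"
  shows "\<exists>u v. x = Inl u \<and> y = Inl v \<and> Gl_E l u v"
proof (cases w)
  case (Inr n)
  then have "n < l" using assms by (auto simp: Np_def split: if_splits)
  then have "ladj l (n+1,0) (n+1,1)" by (auto simp: ladj_def)
  then show ?thesis using assms Inr Ledge2[of l "(n+1,0)" "(n+1,1)" x y] \<open>n < l\<close>
    by (auto simp: Np_def)
next
  case (Inl a)
  then obtain v where "w = Inl v" by blast
  have "\<exists>u v. x = Inl u \<and> y = Inl v \<and> Gl_E l u v" if "a = Inl 0"
    using assms Inl that by (auto simp: Np_def Gl_E_eq)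
  moreover have "x = y" if "a \<noteq> Inl 0"
    using assms Inl that by (auto simp: Np_def split: sum.splits if_splits)
  ultimately show ?thesis using assms by blast
qed

lemma edge_cov_p:
  assumes "Gl_E l u v"
  shows "Inl u \<in> Np l (Inl v) \<or> Inl v \<in> Np l (Inl u) \<or> (\<exists>w. Inl u \<in> Np l w \<and> Inl v \<in> Np l w)"
proof -
  from assms consider a b where "a < l + 2" "b < l + 2" "u = Inl a" "v = Inl b" "a \<noteq> b"
    | p q where "ladj l p q" "u = lad p" "v = lad q" unfolding Gl_E_eq by blast
  then show ?thesis
  proof cases
    case 1
    show ?thesis
    proof (cases "a = 0 \<or> b = 0")
      case True then show ?thesis using 1 by (auto simp: Np_def)
    next
      case False then show ?thesis using 1 by (intro disjI2 exI[of _ "Inl (Inl 0)"]) (auto simp: Np_def)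
    qed
  next
    case 2
    obtain i j i' j' where pq: "p = (i,j)" "q = (i',j')" by force
    have j2: "j = 0 \<or> j = 1" "j' = 0 \<or> j' = 1" using 2 pq by (auto simp: ladj_def)
    consider "i = i'" "i = 0" | "i = i'" "0 < i" | "j = j'" "i' = i + 1" | "j = j'" "i = i' + 1"
      using 2 pq by (auto simp: ladj_def)
    then show ?thesis
    proof cases
      case 1
      then have "(j = 0 \<and> j' = 1) \<or> (j = 1 \<and> j' = 0)" using 2 pq j2 by (auto simp: ladj_def)
      then show ?thesis using 1 2 pq by (auto simp: Np_def L_def lad_def)
    next
      case c: 2
      then have "{p,q} = {(i,0),(i,1)}" using 2 pq j2 by (auto simp: ladj_def)
      moreover have "i \<le> l" using 2 pq by (auto simp: ladj_def)
      ultimately show ?thesis using c 2 pq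
        by (intro disjI2 exI[of _ "Inr (i - 1)"]) (auto simp: Np_def L_def doubleton_eq_iff)
    next
      case 3
      then show ?thesis using 2 pq j2 by (auto simp: Np_def L_def lad_def ladj_def)
    next
      case 4
      then show ?thesis using 2 pq j2 by (auto simp: Np_def L_def lad_def ladj_def)
    qed
  qed
qed



lemma ladj_odd: "ladj l p q \<Longrightarrow> odd (fst p + snd p + fst q + snd q)"
  apply (cases p, cases q)
  apply (simp add: ladj_def)
  by presburger

lemma tri_free:
  assumes "ladj l p q" "Gl_E l (lad p) u" "Gl_E l (lad q) u"
  shows False
proof -
  have pq: "p \<noteq> q" using assms(1) ladj_neq by blast
  from assms(2) consider a b where "lad p = Inl a" "u = Inl b" | r where "ladj l p r" "u = lad r" "lad p \<noteq> u"
    unfolding Gl_E_eq by auto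
  then show False
  proof cases
    case 1
    then have p0: "p = (0,0)" by simp
    from assms(3) consider a' b' where "lad q = Inl a'" "u = Inl b'" | r where "ladj l q r" "u = lad r"
      unfolding Gl_E_eq by auto
    then show False
    proof cases
      case 1 then show False using p0 pq by simp
    next
      case 2 then show False using \<open>u = Inl b\<close> p0 assms(2) unfolding Gl_E_eq by auto
    qed
  next
    case 2
    from assms(3) consider a' b' where "lad q = Inl a'" "u = Inl b'" "lad q \<noteq> u" | r' where "ladj l q r'" "u = lad r'"
      unfolding Gl_E_eq by auto
    then show False
    proof cases
      case 1 then show False using 2 by auto
    next
      case 3: 2
      then have "r' = r" using 2 by simp
      then show False using ladj_odd[OF assms(1)] ladj_odd[OF \<open>ladj l p r\<close>] ladj_odd[OF 3(1)] by presburger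
    qed
  qed
qed



lemma L_inj[simp]: "L p = L q \<longleftrightarrow> p = q"
  by (simp add: L_def)

definition pe :: "nat \<Rightarrow> nat \<Rightarrow> nat \<times> nat" where
  "pe l t = (if t \<le> l then (t,0) else if t \<le> 2*l then (t-l-1,0) else (t-2*l-1,1))"
definition qe :: "nat \<Rightarrow> nat \<Rightarrow> nat \<times> nat" where
  "qe l t = (if t \<le> l then (t,1) else if t \<le> 2*l then (t-l,0) else (t-2*l,1))"

lemma eadj: "t < 3*l+1 \<Longrightarrow> ladj l (pe l t) (qe l t)"
  by (auto simp: pe_def qe_def ladj_def)

lemma einj: "t < 3*l+1 \<Longrightarrow> t' < 3*l+1 \<Longrightarrow> {pe l t, qe l t} = {pe l t', qe l t'} \<Longrightarrow> t = t'"
  unfolding doubleton_eq_iff pe_def qe_def by (auto split: if_splits)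

lemma finite_Gl_V: "finite (Gl_V l)"
  unfolding Gl_V_eq by auto

lemma phy_lower:
  fixes A :: "(((nat + nat \<times> nat) + nat) \<times> ((nat + nat \<times> nat) + nat)) set"
  assumes sub: "A \<subseteq> (Inl ` Gl_V l \<union> Inr ` {..<k}) \<times> (Inl ` Gl_V l \<union> Inr ` {..<k})"
    and ac: "acyclic A"
    and cond: "\<forall>u \<in> Gl_V l. \<forall>v \<in> Gl_V l. u \<noteq> v \<longrightarrow> (Gl_E l u v \<longleftrightarrow> phylogeny_adj A (Inl u) (Inl v))"
  shows "l \<le> k"
proof -
  define V where "V = Gl_V l"
  define LV where "LV = L ` ({..l} \<times> {..<2})"
  define I where "I = {..<3*l+1}"
  have Lin: "L p \<in> Inl ` V" if "fst p \<le> l" "snd p < 2" for p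
    using that unfolding V_def Gl_V_eq L_def by (cases p) auto
  have LV_sub: "LV \<subseteq> Inl ` V" unfolding LV_def using Lin by auto
  have "inj_on L ({..l} \<times> {..<2})" by (auto simp: inj_on_def)
  then have cardLV: "card LV = 2*l+2" unfolding LV_def by (simp add: card_image card_cartesian_product)
  have "finite A" using sub finite_Gl_V by (meson finite_SigmaI finite_imageI finite_subset finite_Un finite_lessThan)
  then have "wf A" using ac by (rule finite_acyclic_wf)
  moreover have "L (0,0) \<in> LV" unfolding LV_def by auto
  ultimately obtain s where s: "s \<in> LV" and s_src: "\<And>y. (y, s) \<in> A \<Longrightarrow> y \<notin> LV"
    unfolding wf_eq_minimal by metis
  define good where "good w t \<longleftrightarrow> ((L (pe l t), w) \<in> A \<and> (L (qe l t), w) \<in> A) \<or>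
     (w = L (qe l t) \<and> (L (pe l t), w) \<in> A) \<or> (w = L (pe l t) \<and> (L (qe l t), w) \<in> A)" for w t
  have ex: "\<exists>w. good w t" if "t \<in> I" for t
  proof -
    have adj: "ladj l (pe l t) (qe l t)" using that eadj unfolding I_def by auto
    then have "fst (pe l t) \<le> l" "snd (pe l t) < 2" "fst (qe l t) \<le> l" "snd (qe l t) < 2"
      by (auto simp: ladj_def)
    then have "Inl (lad (pe l t)) \<in> Inl ` V" "Inl (lad (qe l t)) \<in> Inl ` V"
      using Lin[of "pe l t"] Lin[of "qe l t"] by (auto simp: L_def)
    then have "lad (pe l t) \<in> V" "lad (qe l t) \<in> V" by auto
    moreover have "lad (pe l t) \<noteq> lad (qe l t)" using ladj_neq[OF adj] by simp
    ultimately have "phylogeny_adj A (L (pe l t)) (L (qe l t))"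
      using cond Ledge[OF adj] unfolding V_def L_def by blast
    then show ?thesis unfolding phylogeny_adj_def good_def by blast
  qed
  define cov where "cov t = (SOME w. good w t)" for t
  have cov_good: "good (cov t) t" if "t \<in> I" for t
    unfolding cov_def using ex[OF that] by (rule someI_ex)
  define Q where "Q w = {z \<in> Inl ` V. z = w \<or> (z, w) \<in> A}" for w
  have Qclique: "\<exists>u1 u2. z1 = Inl u1 \<and> z2 = Inl u2 \<and> Gl_E l u1 u2"
    if "z1 \<in> Q w" "z2 \<in> Q w" "z1 \<noteq> z2" for z1 z2 w
  proof -
    obtain u1 u2 where u: "z1 = Inl u1" "z2 = Inl u2" "u1 \<in> V" "u2 \<in> V"
    proof -
      have "z1 \<in> Inl ` V" "z2 \<in> Inl ` V" using \<open>z1 \<in> Q w\<close> \<open>z2 \<in> Q w\<close> unfolding Q_def by auto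
      then obtain u1 u2 where "z1 = Inl u1" "z2 = Inl u2" "u1 \<in> V" "u2 \<in> V" by blast
      then show thesis using that by blast
    qed
    then have "u1 \<noteq> u2" using that by auto
    moreover have "phylogeny_adj A z1 z2" using that unfolding Q_def phylogeny_adj_def by auto
    ultimately show ?thesis using cond u unfolding V_def by auto
  qed
  have Qeq: "Q w = {L (pe l t), L (qe l t)}" if "good w t" "t \<in> I" for w t
  proof
    have adj: "ladj l (pe l t) (qe l t)" using that eadj unfolding I_def by auto
    then have "fst (pe l t) \<le> l" "snd (pe l t) < 2" "fst (qe l t) \<le> l" "snd (qe l t) < 2"
      by (auto simp: ladj_def)
    then show "{L (pe l t), L (qe l t)} \<subseteq> Q w"
      using Lin that(1) unfolding Q_def good_def by auto
    show "Q w \<subseteq> {L (pe l t), L (qe l t)}"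
    proof
      fix z assume z: "z \<in> Q w"
      show "z \<in> {L (pe l t), L (qe l t)}"
      proof (rule ccontr)
        assume nz: "z \<notin> {L (pe l t), L (qe l t)}"
        have "L (pe l t) \<in> Q w" "L (qe l t) \<in> Q w"
          using \<open>{L (pe l t), L (qe l t)} \<subseteq> Q w\<close> by auto
        then obtain u1 u2 u1' u2' where a: "z = Inl u1" "Inl (lad (pe l t)) = Inl u2" "Gl_E l u1 u2"
          and b: "z = Inl u1'" "Inl (lad (qe l t)) = Inl u2'" "Gl_E l u1' u2'"
          using Qclique[OF z, of "L (pe l t)"] Qclique[OF z, of "L (qe l t)"] nz unfolding L_def by force
        then obtain u where "z = Inl u" "Gl_E l u (lad (pe l t))" "Gl_E l u (lad (qe l t))"
          by auto
        then show False using tri_free[OF adj] Gl_E_sym by blast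
      qed
    qed
  qed
  have inj: "inj_on cov I"
  proof (rule inj_onI)
    fix t t' assume tt: "t \<in> I" "t' \<in> I" "cov t = cov t'"
    then have "{L (pe l t), L (qe l t)} = {L (pe l t'), L (qe l t')}"
      using Qeq[OF cov_good[of t]] Qeq[OF cov_good[of t']] by metis
    then have "{pe l t, qe l t} = {pe l t', qe l t'}" unfolding doubleton_eq_iff by simp
    then show "t = t'" using einj tt unfolding I_def by blast
  qed
  have range: "cov t \<in> (LV - {s}) \<union> Inr ` {..<k}" if t: "t \<in> I" for t
  proof -
    have g: "good (cov t) t" using cov_good[OF t] .
    then have cin: "cov t \<in> Inl ` V \<union> Inr ` {..<k}" using sub unfolding good_def V_def by blast
    show ?thesis
    proof (cases "cov t \<in> Inl ` V")
      case False then show ?thesis using cin by auto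
    next
      case True
      then have "cov t \<in> Q (cov t)" unfolding Q_def by auto
      then have c2: "cov t \<in> {L (pe l t), L (qe l t)}" using Qeq[OF g t] by simp
      have adj: "ladj l (pe l t) (qe l t)" using t eadj unfolding I_def by auto
      then have "fst (pe l t) \<le> l" "snd (pe l t) < 2" "fst (qe l t) \<le> l" "snd (qe l t) < 2"
        by (auto simp: ladj_def)
      then have "pe l t \<in> {..l} \<times> {..<2}" "qe l t \<in> {..l} \<times> {..<2}" by (auto simp: mem_Times_iff)
      then have inLV: "{L (pe l t), L (qe l t)} \<subseteq> LV" unfolding LV_def by (simp add: imageI)
      have ne: "L (pe l t) \<noteq> L (qe l t)" using ladj_neq[OF adj] by simp
      obtain z where z: "z \<in> {L (pe l t), L (qe l t)}" "z \<noteq> cov t" using c2 ne by auto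
      then have "z \<in> Q (cov t)" using Qeq[OF g t] by simp
      then have "(z, cov t) \<in> A" using z(2) unfolding Q_def by auto
      moreover have "z \<in> LV" using z inLV by auto
      ultimately have "cov t \<noteq> s" using s_src by blast
      then show ?thesis using c2 inLV by auto
    qed
  qed
  have "card (cov ` I) = 3*l+1" using inj card_image unfolding I_def by fastforce
  moreover have "card (cov ` I) \<le> card ((LV - {s}) \<union> Inr ` {..<k})"
    using range by (intro card_mono) (auto simp: LV_def)
  moreover have "card ((LV - {s}) \<union> Inr ` {..<k}) \<le> card (LV - {s}) + card (Inr ` {..<k} :: ((nat + nat \<times> nat) + nat) set)"
    by (rule card_Un_le)
  moreover have "card (LV - {s}) = 2*l+1" using cardLV s by (simp add: LV_def)
  moreover have "card (Inr ` {..<k} :: ((nat + nat \<times> nat) + nat) set) = k"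
    by (simp add: card_image)
  ultimately show ?thesis by linarith
qed



lemma Np_sub:
  assumes "x \<in> Np l w"
  shows "x \<in> Inl ` Gl_V l \<union> Inr ` {..<l} \<and> w \<in> Inl ` Gl_V l \<union> Inr ` {..<l}"
proof -
  have Lin: "L p \<in> Inl ` Gl_V l" if "fst p \<le> l" "snd p < 2" for p
    using that unfolding Gl_V_eq L_def by (cases p) auto
  have Cin: "Inl (Inl k) \<in> Inl ` Gl_V l" if "k < l + 2" for k
    using that unfolding Gl_V_eq by auto
  have Rin: "Inl (Inr (i,j)) \<in> Inl ` Gl_V l" if "i \<le> l" "j < 2" "(i,j) \<noteq> (0,0)" for i j
    using Lin[of "(i,j)"] that by (auto simp: L_def lad_def)
  show ?thesis
  proof (cases w)
    case (Inr n)
    then show ?thesis using assms Lin by (auto simp: Np_def split: if_splits)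
  next
    case (Inl a)
    show ?thesis
    proof (cases a)
      case (Inl k)
      then show ?thesis using assms \<open>w = _\<close> Lin Cin by (auto simp: Np_def split: if_splits)
    next
      case (Inr p)
      obtain i j where p: "p = (i,j)" by force
      then show ?thesis using assms \<open>w = _\<close> Inr Lin Rin[of i j] by (auto simp: Np_def split: if_splits)
    qed
  qed
qed

lemma phy_exists:
  "\<exists>A :: (((nat + nat \<times> nat) + nat) \<times> ((nat + nat \<times> nat) + nat)) set.
     A \<subseteq> (Inl ` Gl_V l \<union> Inr ` {..<l}) \<times> (Inl ` Gl_V l \<union> Inr ` {..<l}) \<and> acyclic A \<and>
     (\<forall>i u. (Inr i, Inl u) \<notin> A) \<and>
     (\<forall>u \<in> Gl_V l. \<forall>v \<in> Gl_V l. u \<noteq> v \<longrightarrow> (Gl_E l u v \<longleftrightarrow> phylogeny_adj A (Inl u) (Inl v)))"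
proof (intro exI[of _ "{(x,w). x \<in> Np l w}"] conjI ballI impI allI)
  show "{(x,w). x \<in> Np l w} \<subseteq> (Inl ` Gl_V l \<union> Inr ` {..<l}) \<times> (Inl ` Gl_V l \<union> Inr ` {..<l})"
    using Np_sub by blast
  show "acyclic {(x,w). x \<in> Np l w}"
    by (rule acyclic_rank[of _ "fp l"]) (auto dest: Np_rank)
  fix i :: nat and u :: "nat + nat \<times> nat"
  show "(Inr i, Inl u) \<notin> {(x,w). x \<in> Np l w}" using Np_Inl by fastforce
next
  fix u v :: "nat + nat \<times> nat" assume "u \<noteq> v"
  show "Gl_E l u v \<longleftrightarrow> phylogeny_adj {(x,w). x \<in> Np l w} (Inl u) (Inl v)"
  proof
    assume "Gl_E l u v"
    then show "phylogeny_adj {(x,w). x \<in> Np l w} (Inl u) (Inl v)"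
      using edge_cov_p[of l u v] \<open>u \<noteq> v\<close> unfolding phylogeny_adj_def by auto
  next
    assume "phylogeny_adj {(x,w). x \<in> Np l w} (Inl u) (Inl v)"
    then consider "Inl u \<in> Np l (Inl v)" | "Inl v \<in> Np l (Inl u)" | w where "Inl u \<in> Np l w" "Inl v \<in> Np l w"
      unfolding phylogeny_adj_def by auto
    then show "Gl_E l u v"
    proof cases
      case 1 then show ?thesis using Np_arc by fastforce
    next
      case 2 then show ?thesis using Np_arc Gl_E_sym by fastforce
    next
      case 3 then show ?thesis using Np_clique[OF 3] \<open>u \<noteq> v\<close> by auto
    qed
  qed
qed

lemma no_iso: "\<forall>x\<in>Gl_V l. \<exists>y\<in>Gl_V l. x \<noteq> y \<and> Gl_E l x y"
proof
  fix x assume "x \<in> Gl_V l"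
  then consider a where "a < l + 2" "x = Inl a" | i j where "i \<le> l" "j < 2" "x = lad (i,j)"
    unfolding Gl_V_eq by auto
  then show "\<exists>y\<in>Gl_V l. x \<noteq> y \<and> Gl_E l x y"
  proof cases
    case 1
    then show ?thesis
      by (intro bexI[of _ "Inl (if a = 0 then 1 else 0)"]) (auto simp: Gl_V_eq Gl_E_eq)
  next
    case 2
    then have adj: "ladj l (i,j) (i, 1 - j)" by (auto simp: ladj_def) presburger
    then have "Gl_E l x (lad (i, 1-j))" using Ledge 2 by blast
    moreover have "lad (i, 1-j) \<in> Gl_V l" using 2 unfolding Gl_V_eq by auto
    ultimately show ?thesis unfolding Gl_E_eq by blast
  qed
qed

theorem mainTheorem12:
  fixes l :: nat
  assumes "0 < l"
  shows "competition_number (Gl_V l) (Gl_E l) = 1 \<and> phylogeny_number (Gl_V l) (Gl_E l) = l"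
proof
  show "competition_number (Gl_V l) (Gl_E l) = 1"
    unfolding competition_number_def
  proof (rule Least_equality)
    show "\<exists>A :: (((nat + nat \<times> nat) + nat) \<times> ((nat + nat \<times> nat) + nat)) set.
     A \<subseteq> (Inl ` Gl_V l \<union> Inr ` {..<1}) \<times> (Inl ` Gl_V l \<union> Inr ` {..<1}) \<and> acyclic A \<and>
     (\<forall>x \<in> Inl ` Gl_V l \<union> Inr ` {..<1}. \<forall>y \<in> Inl ` Gl_V l \<union> Inr ` {..<1}. x \<noteq> y \<longrightarrow>
        ((\<exists>u v. x = Inl u \<and> y = Inl v \<and> Gl_E l u v) \<longleftrightarrow>
         (\<exists>w. (x, w) \<in> A \<and> (y, w) \<in> A)))"
      using comp_exists[OF assms] .
  next
    fix y :: nat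
    assume h: "\<exists>A :: (((nat + nat \<times> nat) + nat) \<times> ((nat + nat \<times> nat) + nat)) set.
     A \<subseteq> (Inl ` Gl_V l \<union> Inr ` {..<y}) \<times> (Inl ` Gl_V l \<union> Inr ` {..<y}) \<and> acyclic A \<and>
     (\<forall>x \<in> Inl ` Gl_V l \<union> Inr ` {..<y}. \<forall>z \<in> Inl ` Gl_V l \<union> Inr ` {..<y}. x \<noteq> z \<longrightarrow>
        ((\<exists>u v. x = Inl u \<and> z = Inl v \<and> Gl_E l u v) \<longleftrightarrow>
         (\<exists>w. (x, w) \<in> A \<and> (z, w) \<in> A)))"
    show "1 \<le> y"
    proof (rule ccontr)
      assume "\<not> 1 \<le> y"
      then have "y = 0" by simp
      moreover have "Gl_V l \<noteq> {}" unfolding Gl_V_eq by auto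
      ultimately show False using h no_sink[OF finite_Gl_V _ no_iso] by blast
    qed
  qed
  show "phylogeny_number (Gl_V l) (Gl_E l) = l"
    unfolding phylogeny_number_def
  proof (rule Least_equality)
    show "\<exists>A :: (((nat + nat \<times> nat) + nat) \<times> ((nat + nat \<times> nat) + nat)) set.
     A \<subseteq> (Inl ` Gl_V l \<union> Inr ` {..<l}) \<times> (Inl ` Gl_V l \<union> Inr ` {..<l}) \<and> acyclic A \<and>
     (\<forall>i u. (Inr i, Inl u) \<notin> A) \<and>
     (\<forall>u \<in> Gl_V l. \<forall>v \<in> Gl_V l. u \<noteq> v \<longrightarrow> (Gl_E l u v \<longleftrightarrow> phylogeny_adj A (Inl u) (Inl v)))"
      by (rule phy_exists)
  next
    fix y :: nat
    assume "\<exists>A :: (((nat + nat \<times> nat) + nat) \<times> ((nat + nat \<times> nat) + nat)) set.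
     A \<subseteq> (Inl ` Gl_V l \<union> Inr ` {..<y}) \<times> (Inl ` Gl_V l \<union> Inr ` {..<y}) \<and> acyclic A \<and>
     (\<forall>i u. (Inr i, Inl u) \<notin> A) \<and>
     (\<forall>u \<in> Gl_V l. \<forall>v \<in> Gl_V l. u \<noteq> v \<longrightarrow> (Gl_E l u v \<longleftrightarrow> phylogeny_adj A (Inl u) (Inl v)))"
    then show "l \<le> y" using phy_lower by blast
  qed
qed


end
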